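(* Let $X$ be a real or complex Banach space, $(A(n))_{n\in\mathbb{N}}$ a sequence in $\mathcal{B}(X)$, and $P:\mathbb{N}\to\mathcal{B}(X)$ a family of projections compatible with the system $x_{n+1}=A(n)x_n$, with complementary family $Q(n)=I-P(n)$. Then the system is $P$-uniformly exponentially dichotomic if and only if there exist constants $D,d>0$ such that \[ \sum_{j=m}^{\infty}e^{d(j-m)}\|\mathcal{A}_P(j,n)x\|+\sum_{k=n}^{m}e^{d(m-k)}\|\mathcal{A}_Q(k,n)x\|\le D\big(\|\mathcal{A}_P(m,n)x\|+\|\mathcal{A}_Q(m,n)x\|\big) \] for all $(m,n)\in\Delta$ and all $x\in X$.
   Context: $\mathbb{N}$ denotes the set of positive integers; $\mathcal{B}(X)$ is the Banach algebra of bounded linear operators on $X$, and $I$ is the identity operator. $\Delta=\{(m,n)\in\mathbb{N}^2: m\ge n\}$. A family of projections is a map $P:\mathbb{N}\to\mathcal{B}(X)$ with $P(n)^2=P(n)$ for all $n$; its complementary family is $Q(n)=I-P(n)$. $P$ is compatible with the system $x_{n+1}=A(n)x_n$ if $A(n+1)P(n)=P(n+1)A(n+1)$ for all $n\in\mathbb{N}$. For $(m,n)\in\Delta$ define $\mathcal{A}_P(m,n)=A(m)\cdots A(n+1)P(n)$ if $m>n$ and $\mathcal{A}_P(n,n)=P(n)$; similarly $\mathcal{A}_Q(m,n)=A(m)\cdots A(n+1)Q(n)$ if $m>n$ and $\mathcal{A}_Q(n,n)=Q(n)$. The system is $P$-uniformly exponentially dichotomic if there exist constants $N\ge1$ and $\alpha>0$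 such that $e^{\alpha(m-n)}\big(\|\mathcal{A}_P(m,n)x\|+\|Q(n)x\|\big)\le N\big(\|P(n)x\|+\|\mathcal{A}_Q(m,n)x\|\big)$ for all $(m,n)\in\Delta$, $x\in X$. *)

theory Defs
  imports "HOL-Analysis.Analysis"
begin

text \<open>Time indices are positive naturals (n \<ge> 1). Operators in B(X) are bounded linear maps
  'a \<Rightarrow>L 'a on a Banach space 'a (real Banach space; complex ones are included as real ones).\<close>

definition proj_family :: "(nat \<Rightarrow> ('a::real_normed_vector \<Rightarrow>\<^sub>L 'a)) \<Rightarrow> bool" where
  "proj_family P \<longleftrightarrow> (\<forall>n\<ge>1. P n o\<^sub>L P n = P n)"

definition compl_family :: "(nat \<Rightarrow> ('a::real_normed_vector \<Rightarrow>\<^sub>L 'a)) \<Rightarrow> nat \<Rightarrow> ('a \<Rightarrow>\<^sub>L 'a)" where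
  "compl_family P n = id_blinfun - P n"

definition compatible :: "(nat \<Rightarrow> ('a::real_normed_vector \<Rightarrow>\<^sub>L 'a)) \<Rightarrow> (nat \<Rightarrow> ('a \<Rightarrow>\<^sub>L 'a)) \<Rightarrow> bool" where
  "compatible A P \<longleftrightarrow> (\<forall>n\<ge>1. A (n+1) o\<^sub>L P n = P (n+1) o\<^sub>L A (n+1))"

fun evol :: "(nat \<Rightarrow> ('a::real_normed_vector \<Rightarrow>\<^sub>L 'a)) \<Rightarrow> nat \<Rightarrow> nat \<Rightarrow> ('a \<Rightarrow>\<^sub>L 'a)" where
  "evol A n 0 = id_blinfun"
| "evol A n (Suc k) = A (n + Suc k) o\<^sub>L evol A n k"

text \<open>\<A>_P(m,n) = A(m)...A(n+1)P(n) for m > n, P(n) for m = n.\<close>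
definition cocP :: "(nat \<Rightarrow> ('a::real_normed_vector \<Rightarrow>\<^sub>L 'a)) \<Rightarrow> (nat \<Rightarrow> ('a \<Rightarrow>\<^sub>L 'a)) \<Rightarrow> nat \<Rightarrow> nat \<Rightarrow> ('a \<Rightarrow>\<^sub>L 'a)" where
  "cocP A P m n = evol A n (m - n) o\<^sub>L P n"

definition cocQ :: "(nat \<Rightarrow> ('a::real_normed_vector \<Rightarrow>\<^sub>L 'a)) \<Rightarrow> (nat \<Rightarrow> ('a \<Rightarrow>\<^sub>L 'a)) \<Rightarrow> nat \<Rightarrow> nat \<Rightarrow> ('a \<Rightarrow>\<^sub>L 'a)" where
  "cocQ A P m n = evol A n (m - n) o\<^sub>L compl_family P n"

definition P_ued :: "(nat \<Rightarrow> ('a::real_normed_vector \<Rightarrow>\<^sub>L 'a)) \<Rightarrow> (nat \<Rightarrow> ('a \<Rightarrow>\<^sub>L 'a)) \<Rightarrow> bool" where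
  "P_ued A P \<longleftrightarrow> (\<exists>N::real. \<exists>\<alpha>::real. N \<ge> 1 \<and> \<alpha> > 0 \<and>
     (\<forall>m n x. 1 \<le> n \<and> n \<le> m \<longrightarrow>
        exp (\<alpha> * (real m - real n)) *
          (norm (blinfun_apply (cocP A P m n) x) + norm (blinfun_apply (compl_family P n) x))
        \<le> N * (norm (blinfun_apply (P n) x) + norm (blinfun_apply (cocQ A P m n) x))))"

end

theory Submission
  imports Defs
begin

lemma evol_add: "blinfun_apply (evol A n (a+b)) x = blinfun_apply (evol A (n+a) b) (blinfun_apply (evol A n a) x)"
  by (induction b arbitrary: x) (auto simp: add.assoc)

lemma evol_comm:
  assumes "compatible A P" "n \<ge> 1"
  shows "blinfun_apply (P (n+k)) (blinfun_apply (evol A n k) x) = blinfun_apply (evol A n k) (blinfun_apply (P n) x)"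
proof (induction k)
  case 0 then show ?case by simp
next
  case (Suc k)
  have c: "A (n+k+1) o\<^sub>L P (n+k) = P (n+k+1) o\<^sub>L A (n+k+1)"
    using assms unfolding compatible_def by auto
  have "blinfun_apply (P (n+Suc k)) (blinfun_apply (evol A n (Suc k)) x)
      = blinfun_apply (P (n+k+1) o\<^sub>L A (n+k+1)) (blinfun_apply (evol A n k) x)" by simp
  also have "\<dots> = blinfun_apply (A (n+k+1) o\<^sub>L P (n+k)) (blinfun_apply (evol A n k) x)" using c by simp
  also have "\<dots> = blinfun_apply (evol A n (Suc k)) (blinfun_apply (P n) x)" using Suc by simp
  finally show ?case .
qed

lemma Q_apply: "blinfun_apply (compl_family P n) x = x - blinfun_apply (P n) x"
  by (simp add: compl_family_def blinfun.diff_left)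

lemma PP: "proj_family P \<Longrightarrow> n \<ge> 1 \<Longrightarrow> blinfun_apply (P n) (blinfun_apply (P n) x) = blinfun_apply (P n) x"
  unfolding proj_family_def by (metis blinfun_apply_blinfun_compose)

lemma PQ: "proj_family P \<Longrightarrow> n \<ge> 1 \<Longrightarrow> blinfun_apply (P n) (blinfun_apply (compl_family P n) x) = 0"
  by (simp add: Q_apply PP blinfun.diff_right)

lemma QP: "proj_family P \<Longrightarrow> n \<ge> 1 \<Longrightarrow> blinfun_apply (compl_family P n) (blinfun_apply (P n) x) = 0"
  by (simp add: Q_apply PP)

lemma QQ: "proj_family P \<Longrightarrow> n \<ge> 1 \<Longrightarrow> blinfun_apply (compl_family P n) (blinfun_apply (compl_family P n) x) = blinfun_apply (compl_family P n) x"
  by (simp add: Q_apply PP blinfun.diff_right)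

lemma cocP_apply: "blinfun_apply (cocP A P m n) x = blinfun_apply (evol A n (m-n)) (blinfun_apply (P n) x)"
  by (simp add: cocP_def)
lemma cocQ_apply: "blinfun_apply (cocQ A P m n) x = blinfun_apply (evol A n (m-n)) (blinfun_apply (compl_family P n) x)"
  by (simp add: cocQ_def)


lemma F1:
  assumes pf: "proj_family P" and cp: "compatible A P"
    and H: "\<forall>m n x. 1 \<le> n \<and> n \<le> m \<longrightarrow>
        exp (\<alpha> * (real m - real n)) *
          (norm (blinfun_apply (cocP A P m n) x) + norm (blinfun_apply (compl_family P n) x))
        \<le> N * (norm (blinfun_apply (P n) x) + norm (blinfun_apply (cocQ A P m n) x))"
    and n: "1 \<le> n" "n \<le> m" "m \<le> j"
  shows "exp (\<alpha> * (real j - real m)) * norm (blinfun_apply (cocP A P j n) x) \<le> N * norm (blinfun_apply (cocP A P m n) x)"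
proof -
  define y where "y = blinfun_apply (cocP A P m n) x"
  have Py: "blinfun_apply (P m) y = y"
    using evol_comm[OF cp n(1), of "m-n"] PP[OF pf n(1)] n unfolding y_def cocP_apply by simp
  have Qy: "blinfun_apply (compl_family P m) y = 0" by (simp add: Q_apply Py)
  have cQ: "blinfun_apply (cocQ A P j m) y = 0" by (simp add: cocQ_apply Qy)
  have cP: "blinfun_apply (cocP A P j m) y = blinfun_apply (cocP A P j n) x"
  proof -
    have "blinfun_apply (cocP A P j m) y = blinfun_apply (evol A m (j-m)) y" by (simp add: cocP_apply Py)
    also have "\<dots> = blinfun_apply (cocP A P j n) x"
      using evol_add[of A n "m-n" "j-m"] n by (simp add: y_def cocP_apply)
    finally show ?thesis .
  qed
  have "exp (\<alpha> * (real j - real m)) * (norm (blinfun_apply (cocP A P j m) y) + norm (blinfun_apply (compl_family P m) y))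
        \<le> N * (norm (blinfun_apply (P m) y) + norm (blinfun_apply (cocQ A P j m) y))"
    using H n by auto
  then show ?thesis using cQ cP Qy Py y_def by simp
qed

lemma F2:
  assumes pf: "proj_family P" and cp: "compatible A P"
    and H: "\<forall>m n x. 1 \<le> n \<and> n \<le> m \<longrightarrow>
        exp (\<alpha> * (real m - real n)) *
          (norm (blinfun_apply (cocP A P m n) x) + norm (blinfun_apply (compl_family P n) x))
        \<le> N * (norm (blinfun_apply (P n) x) + norm (blinfun_apply (cocQ A P m n) x))"
    and n: "1 \<le> n" "n \<le> k" "k \<le> m"
  shows "exp (\<alpha> * (real m - real k)) * norm (blinfun_apply (cocQ A P k n) x) \<le> N * norm (blinfun_apply (cocQ A P m n) x)"
proof -
  define y where "y = blinfun_apply (cocQ A P k n) x"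
  have Py: "blinfun_apply (P k) y = 0"
    using evol_comm[OF cp n(1), of "k-n"] PQ[OF pf n(1)] n unfolding y_def cocQ_apply by simp
  have Qy: "blinfun_apply (compl_family P k) y = y" by (simp add: Q_apply Py)
  have cP: "blinfun_apply (cocP A P m k) y = 0" by (simp add: cocP_apply Py)
  have cQ: "blinfun_apply (cocQ A P m k) y = blinfun_apply (cocQ A P m n) x"
  proof -
    have "blinfun_apply (cocQ A P m k) y = blinfun_apply (evol A k (m-k)) y" by (simp add: cocQ_apply Qy)
    also have "\<dots> = blinfun_apply (cocQ A P m n) x"
      using evol_add[of A n "k-n" "m-k"] n by (simp add: y_def cocQ_apply)
    finally show ?thesis .
  qed
  have "exp (\<alpha> * (real m - real k)) * (norm (blinfun_apply (cocP A P m k) y) + norm (blinfun_apply (compl_family P k) y))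
        \<le> N * (norm (blinfun_apply (P k) y) + norm (blinfun_apply (cocQ A P m k) y))"
    using H n by auto
  then show ?thesis using cQ cP Qy Py y_def by simp
qed


lemma geo_fin: assumes "0 \<le> (r::real)" "r < 1" shows "(\<Sum>k=n..m. r^(m-k)) \<le> 1/(1-r)"
proof -
  have inj: "inj_on (\<lambda>k. m-k) {n..m}" by (rule inj_onI) auto
  have "(\<Sum>k=n..m. r^(m-k)) = (\<Sum>j\<in>(\<lambda>k. m-k)`{n..m}. r^j)"
    by (simp add: sum.reindex[OF inj] o_def)
  also have "\<dots> \<le> (\<Sum>j. r^j)"
    by (rule sum_le_suminf) (use assms in \<open>auto intro: summable_geometric\<close>)
  also have "\<dots> = 1/(1-r)" using assms by (simp add: suminf_geometric)
  finally show ?thesis .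
qed

lemma exp_trick: assumes "(\<alpha>::real) > 0" "exp (\<alpha> * real i) * t \<le> c"
  shows "exp (\<alpha>/2 * real i) * t \<le> c * exp (-\<alpha>/2)^i"
proof -
  have e: "exp (-\<alpha>/2)^i = exp (-\<alpha>/2 * real i)" by (metis exp_of_nat_mult mult.commute)
  have "exp (\<alpha>/2 * real i) * t = exp (-\<alpha>/2 * real i) * (exp (\<alpha> * real i) * t)"
    by (simp add: mult.assoc[symmetric] exp_add[symmetric] algebra_simps)
  also have "\<dots> \<le> exp (-\<alpha>/2 * real i) * c" using assms by (intro mult_left_mono) auto
  moreover have "c * exp (-\<alpha>/2)^i = exp (-\<alpha>/2 * real i) * c" by (simp only: e mult.commute)
  ultimately show ?thesis by linarith
qed

lemma B1:
  assumes pf: "proj_family P"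
    and H: "\<forall>m n x. 1 \<le> n \<and> n \<le> m \<longrightarrow>
         summable (\<lambda>i. exp (d * real i) * norm (blinfun_apply (cocP A P (m + i) n) x)) \<and>
         (\<Sum>i. exp (d * real i) * norm (blinfun_apply (cocP A P (m + i) n) x))
         + (\<Sum>k=n..m. exp (d * (real m - real k)) * norm (blinfun_apply (cocQ A P k n) x))
         \<le> D * (norm (blinfun_apply (cocP A P m n) x) + norm (blinfun_apply (cocQ A P m n) x))"
    and n: "1 \<le> n" "n \<le> m"
  shows "exp (d * (real m - real n)) * norm (blinfun_apply (cocP A P m n) x) \<le> D * norm (blinfun_apply (P n) x)"
proof -
  define f where "f = (\<lambda>i. exp (d * real i) * norm (blinfun_apply (cocP A P (n + i) n) x))"
  have a: "blinfun_apply (cocP A P k n) (blinfun_apply (P n) x) = blinfun_apply (cocP A P k n) x" for k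
    by (simp add: cocP_apply PP[OF pf n(1)])
  have b: "blinfun_apply (cocQ A P k n) (blinfun_apply (P n) x) = 0" for k
    by (simp add: cocQ_apply QP[OF pf n(1)])
  from spec[OF spec[OF spec[OF H, of n], of n], of "blinfun_apply (P n) x"] n have "summable f \<and> suminf f \<le> D * norm (blinfun_apply (P n) x)"
    by (simp add: a b f_def cocP_apply PP[OF pf n(1)])
  moreover have "f (m-n) \<le> suminf f"
    using sum_le_suminf[of f "{m-n}"] calculation by (auto simp: f_def)
  ultimately show ?thesis using n by (simp add: f_def of_nat_diff)
qed

lemma B2:
  assumes pf: "proj_family P"
    and H: "\<forall>m n x. 1 \<le> n \<and> n \<le> m \<longrightarrow>
         summable (\<lambda>i. exp (d * real i) * norm (blinfun_apply (cocP A P (m + i) n) x)) \<and>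
         (\<Sum>i. exp (d * real i) * norm (blinfun_apply (cocP A P (m + i) n) x))
         + (\<Sum>k=n..m. exp (d * (real m - real k)) * norm (blinfun_apply (cocQ A P k n) x))
         \<le> D * (norm (blinfun_apply (cocP A P m n) x) + norm (blinfun_apply (cocQ A P m n) x))"
    and n: "1 \<le> n" "n \<le> m"
  shows "exp (d * (real m - real n)) * norm (blinfun_apply (compl_family P n) x) \<le> D * norm (blinfun_apply (cocQ A P m n) x)"
proof -
  define g where "g = (\<lambda>k. exp (d * (real m - real k)) * norm (blinfun_apply (cocQ A P k n) x))"
  have a: "blinfun_apply (cocP A P k n) (blinfun_apply (compl_family P n) x) = 0" for k
    by (simp add: cocP_apply PQ[OF pf n(1)])
  have b: "blinfun_apply (cocQ A P k n) (blinfun_apply (compl_family P n) x) = blinfun_apply (cocQ A P k n) x" for k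
    by (simp add: cocQ_apply QQ[OF pf n(1)])
  from spec[OF spec[OF spec[OF H, of m], of n], of "blinfun_apply (compl_family P n) x"] n have "sum g {n..m} \<le> D * norm (blinfun_apply (cocQ A P m n) x)"
    by (simp add: a b g_def)
  moreover have "g n \<le> sum g {n..m}"
    by (rule member_le_sum) (use n in \<open>auto simp: g_def\<close>)
  ultimately show ?thesis by (simp add: g_def cocQ_apply)
qed


theorem mainTheorem2:
  fixes A P :: "nat \<Rightarrow> ('a::banach \<Rightarrow>\<^sub>L 'a)"
  assumes "proj_family P" and "compatible A P"
  shows "P_ued A P \<longleftrightarrow>
    (\<exists>D::real. \<exists>d::real. D > 0 \<and> d > 0 \<and>
      (\<forall>m n x. 1 \<le> n \<and> n \<le> m \<longrightarrow>
         summable (\<lambda>i. exp (d * real i) * norm (blinfun_apply (cocP A P (m + i) n) x)) \<and>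
         (\<Sum>i. exp (d * real i) * norm (blinfun_apply (cocP A P (m + i) n) x))
         + (\<Sum>k=n..m. exp (d * (real m - real k)) * norm (blinfun_apply (cocQ A P k n) x))
         \<le> D * (norm (blinfun_apply (cocP A P m n) x) + norm (blinfun_apply (cocQ A P m n) x))))"
proof
  assume "P_ued A P"
  then obtain N \<alpha> where N: "N \<ge> 1" "\<alpha> > 0" and H: "\<forall>m n x. 1 \<le> n \<and> n \<le> m \<longrightarrow>
        exp (\<alpha> * (real m - real n)) *
          (norm (blinfun_apply (cocP A P m n) x) + norm (blinfun_apply (compl_family P n) x))
        \<le> N * (norm (blinfun_apply (P n) x) + norm (blinfun_apply (cocQ A P m n) x))"
    unfolding P_ued_def by blast
  define r where "r = exp (-\<alpha>/2)"
  have r: "0 \<le> r" "r < 1" using N by (auto simp: r_def)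
  show "\<exists>D::real. \<exists>d::real. D > 0 \<and> d > 0 \<and>
      (\<forall>m n x. 1 \<le> n \<and> n \<le> m \<longrightarrow>
         summable (\<lambda>i. exp (d * real i) * norm (blinfun_apply (cocP A P (m + i) n) x)) \<and>
         (\<Sum>i. exp (d * real i) * norm (blinfun_apply (cocP A P (m + i) n) x))
         + (\<Sum>k=n..m. exp (d * (real m - real k)) * norm (blinfun_apply (cocQ A P k n) x))
         \<le> D * (norm (blinfun_apply (cocP A P m n) x) + norm (blinfun_apply (cocQ A P m n) x)))"
  proof (intro exI conjI allI impI)
    show "N / (1 - r) > 0" using N r by auto
    show "\<alpha>/2 > 0" using N by auto
    fix m n :: nat and x assume mn: "1 \<le> n \<and> n \<le> m"
    define a where "a = norm (blinfun_apply (cocP A P m n) x)"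
    define b where "b = norm (blinfun_apply (cocQ A P m n) x)"
    have t1: "exp (\<alpha>/2 * real i) * norm (blinfun_apply (cocP A P (m + i) n) x) \<le> N * a * r^i" for i
    proof -
      have "exp (\<alpha> * (real (m+i) - real m)) * norm (blinfun_apply (cocP A P (m+i) n) x) \<le> N * a"
        using F1[OF assms H, of n m "m+i" x] mn by (simp add: a_def)
      then show ?thesis using exp_trick[OF N(2)] by (simp add: r_def)
    qed
    have gs: "summable (\<lambda>i. N * a * r^i)" using r by (intro summable_mult summable_geometric) auto
    show sm: "summable (\<lambda>i. exp (\<alpha>/2 * real i) * norm (blinfun_apply (cocP A P (m + i) n) x))"
      by (rule summable_comparison_test'[OF gs, of 0]) (use t1 in auto)
    have s1: "(\<Sum>i. exp (\<alpha>/2 * real i) * norm (blinfun_apply (cocP A P (m + i) n) x)) \<le> N * a / (1 - r)"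
    proof -
      have "(\<Sum>i. exp (\<alpha>/2 * real i) * norm (blinfun_apply (cocP A P (m + i) n) x)) \<le> (\<Sum>i. N * a * r^i)"
        by (rule suminf_le[OF t1 sm gs])
      also have "\<dots> = N * a * (1 / (1 - r))" using r by (simp add: suminf_mult suminf_geometric)
      finally show ?thesis by simp
    qed
    have t2: "exp (\<alpha>/2 * (real m - real k)) * norm (blinfun_apply (cocQ A P k n) x) \<le> N * b * r^(m-k)"
      if k: "k \<in> {n..m}" for k
    proof -
      have h: "exp (\<alpha> * real (m-k)) * norm (blinfun_apply (cocQ A P k n) x) \<le> N * b"
        using F2[OF assms H, of n k m x] mn k by (simp add: b_def of_nat_diff)
      have e: "real (m-k) = real m - real k" using k by (simp add: of_nat_diff)
      show ?thesis using exp_trick[OF N(2) h] unfolding e r_def .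
    qed
    have s2: "(\<Sum>k=n..m. exp (\<alpha>/2 * (real m - real k)) * norm (blinfun_apply (cocQ A P k n) x)) \<le> N * b / (1 - r)"
    proof -
      have "(\<Sum>k=n..m. exp (\<alpha>/2 * (real m - real k)) * norm (blinfun_apply (cocQ A P k n) x))
          \<le> (\<Sum>k=n..m. N * b * r^(m-k))" by (rule sum_mono[OF t2])
      also have "\<dots> = N * b * (\<Sum>k=n..m. r^(m-k))" by (simp add: sum_distrib_left)
      also have "\<dots> \<le> N * b * (1/(1-r))"
        using geo_fin[OF r] N by (intro mult_left_mono) (auto simp: b_def)
      finally show ?thesis by simp
    qed
    have "N * a / (1 - r) + N * b / (1 - r) = N / (1 - r) * (a + b)" by (simp add: add_divide_distrib distrib_left)
    then show "(\<Sum>i. exp (\<alpha>/2 * real i) * norm (blinfun_apply (cocP A P (m + i) n) x))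
         + (\<Sum>k=n..m. exp (\<alpha>/2 * (real m - real k)) * norm (blinfun_apply (cocQ A P k n) x))
         \<le> N / (1 - r) * (norm (blinfun_apply (cocP A P m n) x) + norm (blinfun_apply (cocQ A P m n) x))"
      using s1 s2 by (simp add: a_def b_def)
  qed
next
  assume "\<exists>D::real. \<exists>d::real. D > 0 \<and> d > 0 \<and>
      (\<forall>m n x. 1 \<le> n \<and> n \<le> m \<longrightarrow>
         summable (\<lambda>i. exp (d * real i) * norm (blinfun_apply (cocP A P (m + i) n) x)) \<and>
         (\<Sum>i. exp (d * real i) * norm (blinfun_apply (cocP A P (m + i) n) x))
         + (\<Sum>k=n..m. exp (d * (real m - real k)) * norm (blinfun_apply (cocQ A P k n) x))
         \<le> D * (norm (blinfun_apply (cocP A P m n) x) + norm (blinfun_apply (cocQ A P m n) x)))"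
  then obtain D d where D: "D > 0" "d > 0" and H: "\<forall>m n x. 1 \<le> n \<and> n \<le> m \<longrightarrow>
         summable (\<lambda>i. exp (d * real i) * norm (blinfun_apply (cocP A P (m + i) n) x)) \<and>
         (\<Sum>i. exp (d * real i) * norm (blinfun_apply (cocP A P (m + i) n) x))
         + (\<Sum>k=n..m. exp (d * (real m - real k)) * norm (blinfun_apply (cocQ A P k n) x))
         \<le> D * (norm (blinfun_apply (cocP A P m n) x) + norm (blinfun_apply (cocQ A P m n) x))"
    by blast
  show "P_ued A P" unfolding P_ued_def
  proof (intro exI conjI allI impI)
    show "max 1 D \<ge> 1" by simp
    show "d > 0" by fact
    fix m n :: nat and x assume mn: "1 \<le> n \<and> n \<le> m"
    have 1: "exp (d * (real m - real n)) * norm (blinfun_apply (cocP A P m n) x) \<le> D * norm (blinfun_apply (P n) x)"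
      using B1[OF assms(1) H] mn by auto
    have 2: "exp (d * (real m - real n)) * norm (blinfun_apply (compl_family P n) x) \<le> D * norm (blinfun_apply (cocQ A P m n) x)"
      using B2[OF assms(1) H] mn by auto
    have "D * (norm (blinfun_apply (P n) x) + norm (blinfun_apply (cocQ A P m n) x))
       \<le> max 1 D * (norm (blinfun_apply (P n) x) + norm (blinfun_apply (cocQ A P m n) x))"
      by (intro mult_right_mono) auto
    then show "exp (d * (real m - real n)) *
          (norm (blinfun_apply (cocP A P m n) x) + norm (blinfun_apply (compl_family P n) x))
        \<le> max 1 D * (norm (blinfun_apply (P n) x) + norm (blinfun_apply (cocQ A P m n) x))"
      using 1 2 by (simp add: distrib_left distrib_right)
  qed
qed

end
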